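(* Let $f:\mathbb{R}^n\to\mathbb{R}$ be convex and $L$-smooth for some $L>0$, and suppose $f$ has a minimizer $x^\star\in\mathbb{R}^n$. Let $\{x^k\}$, $\{t_k\}$ be generated by APBM with models $\hat f^k$ satisfying, for every $k\ge1$: (a) $\hat f^k$ is convex; (b) $\hat f^k(x)\ge f(y^k)+\langle\nabla f(y^k),x-y^k\rangle$ for all $x\in\mathbb{R}^n$; (c) $\hat f^k(x)\le f(x)$ for all $x\in\mathbb{R}^n$. Then for every $k\ge1$, $$f(x^k)-f(x^\star)\le\frac{L\|x^0-x^\star\|^2}{2t_k^2}.$$
   Context: APBM (accelerated proximal bundle method) for minimizing $f$: given $L>0$ and an initial point $x^0\in\mathbb{R}^n$, set $y^1=x^0$ and $t_1=1$. For $k=1,2,\dots$, given a model $\hat f^k:\mathbb{R}^n\to\mathbb{R}$, set $x^k=\arg\min_{x\in\mathbb{R}^n}\ \hat f^k(x)+\frac{L}{2}\|x-y^k\|^2$, $t_{k+1}=\frac{1+\sqrt{1+4t_k^2}}{2}$, $y^{k+1}=x^k+\frac{t_k-1}{t_{k+1}}(x^k-x^{k-1})$. A differentiable $f$ is $L$-smooth if $\|\nabla f(x)-\nabla f(y)\|\le L\|x-y\|$ for all $x,y\in\mathbb{R}^n$ (Euclidean norm). *)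

theory Defs
  imports "HOL-Analysis.Analysis"
begin

end

theory Submission
  imports Defs
begin

lemma descent:
  fixes f :: "'a::euclidean_space \<Rightarrow> real" and grad :: "'a \<Rightarrow> 'a"
  assumes f_grad: "\<And>z. (f has_derivative (\<lambda>h. grad z \<bullet> h)) (at z)"
    and f_smooth: "\<And>u v. norm (grad u - grad v) \<le> L * norm (u - v)"
  shows "f x \<le> f y + grad y \<bullet> (x - y) + L / 2 * (norm (x - y))\<^sup>2"
proof -
  define d where "d = x - y"
  define h where "h = (\<lambda>s::real. f (y + s *\<^sub>R d) - s * (grad y \<bullet> d) - L / 2 * s\<^sup>2 * (norm d)\<^sup>2)"
  define h' where "h' = (\<lambda>s::real. grad (y + s *\<^sub>R d) \<bullet> d - grad y \<bullet> d - L * s * (norm d)\<^sup>2)"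
  have der: "DERIV h s :> h' s" for s
  proof -
    have g: "((\<lambda>s. y + s *\<^sub>R d) has_derivative (\<lambda>r. r *\<^sub>R d)) (at s)"
      by (auto intro!: derivative_eq_intros)
    have "((\<lambda>s. f (y + s *\<^sub>R d)) has_derivative (\<lambda>r. grad (y + s *\<^sub>R d) \<bullet> (r *\<^sub>R d))) (at s)"
      using has_derivative_compose[OF g f_grad] by simp
    then have "((\<lambda>s. f (y + s *\<^sub>R d)) has_real_derivative (grad (y + s *\<^sub>R d) \<bullet> d)) (at s)"
      unfolding has_field_derivative_def by (rule has_derivative_eq_rhs) (auto simp: fun_eq_iff)
    then show ?thesis unfolding h_def h'_def
      by (auto intro!: derivative_eq_intros)
  qed
  have "h' s \<le> 0" if "0 \<le> s" for s
  proof -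
    have "(grad (y + s *\<^sub>R d) - grad y) \<bullet> d \<le> norm (grad (y + s *\<^sub>R d) - grad y) * norm d"
      by (rule norm_cauchy_schwarz)
    also have "\<dots> \<le> L * norm (s *\<^sub>R d) * norm d"
      using f_smooth[of "y + s *\<^sub>R d" y] by (simp add: mult_right_mono)
    also have "\<dots> = L * s * (norm d)\<^sup>2" using that by (simp add: power2_eq_square)
    finally show ?thesis unfolding h'_def by (simp add: inner_diff_left)
  qed
  obtain z where z: "0 < z" "z < 1" "h 1 - h 0 = (1 - 0) * h' z"
    using MVT2[of 0 1 h h'] der by auto
  have "h 1 \<le> h 0" using z \<open>\<And>s. 0 \<le> s \<Longrightarrow> h' s \<le> 0\<close>[of z] by simp
  then show ?thesis unfolding h_def d_def by (simp add: algebra_simps)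
qed

lemma pos_lim:
  fixes A C :: real
  assumes "C \<ge> 0" "\<And>l. 0 < l \<Longrightarrow> l \<le> 1 \<Longrightarrow> 0 \<le> A + l * C"
  shows "0 \<le> A"
proof (rule ccontr)
  assume "\<not> 0 \<le> A"
  define l where "l = - A / (C - A)"
  have "C - A > 0" using \<open>\<not> 0 \<le> A\<close> assms(1) by linarith
  have l0: "0 < l" "l \<le> 1" using \<open>C - A > 0\<close> \<open>\<not> 0 \<le> A\<close> assms(1) by (auto simp: l_def field_simps)
  have "A + l * C = - (A^2) / (C - A)" using \<open>C - A > 0\<close> by (simp add: l_def field_simps power2_eq_square)
  also have "\<dots> < 0" using \<open>C - A > 0\<close> \<open>\<not> 0 \<le> A\<close> by (simp add: divide_neg_pos)
  finally show False using assms(2)[OF l0] by simp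
qed

lemma norm_add_sq:
  fixes a b :: "'a::real_inner"
  shows "(norm (a + b))\<^sup>2 = (norm a)\<^sup>2 + 2 * (a \<bullet> b) + (norm b)\<^sup>2"
  by (simp add: power2_norm_eq_inner inner_add inner_commute)

lemma arith_aux:
  fixes gw gx gz L l a N nxy nw :: real
  assumes "gw \<le> (1 - l) * gx + l * gz" "nw = nxy + 2 * l * a + l^2 * N"
    "gx + L / 2 * nxy \<le> gw + L / 2 * nw"
  shows "0 \<le> l * ((gz - gx + L * a) + l * (L / 2 * N))"
proof -
  have "gx + L / 2 * nxy \<le> (1 - l) * gx + l * gz + L / 2 * (nxy + 2 * l * a + l^2 * N)"
    using assms by simp
  then show ?thesis by (simp add: algebra_simps power2_eq_square)
qed

lemma real_aux2: "(n::real) = a + 2 * c + b \<Longrightarrow> L / 2 * n = L / 2 * a + L * c + L / 2 * b"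
  by (simp add: algebra_simps)

lemma three_point:
  fixes g :: "'a::euclidean_space \<Rightarrow> real"
  assumes conv: "convex_on UNIV g" and L: "L > 0"
    and mn: "\<And>z. g x + L / 2 * (norm (x - y))\<^sup>2 \<le> g z + L / 2 * (norm (z - y))\<^sup>2"
  shows "g x + L / 2 * (norm (x - y))\<^sup>2 + L / 2 * (norm (z - x))\<^sup>2 \<le> g z + L / 2 * (norm (z - y))\<^sup>2"
proof -
  have key: "0 \<le> (g z - g x + L * ((x - y) \<bullet> (z - x))) + l * (L / 2 * (norm (z - x))\<^sup>2)"
    if l: "0 < l" "l \<le> 1" for l
  proof -
    have "g ((1 - l) *\<^sub>R x + l *\<^sub>R z) \<le> (1 - l) * g x + l * g z"
      using convex_onD[OF conv] l by simp
    moreover have e: "(1 - l) *\<^sub>R x + l *\<^sub>R z - y = (x - y) + l *\<^sub>R (z - x)"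
      by (simp add: algebra_simps)
    have "(norm ((1 - l) *\<^sub>R x + l *\<^sub>R z - y))\<^sup>2 = (norm (x - y))\<^sup>2 + 2 * l * ((x - y) \<bullet> (z - x)) + l^2 * (norm (z - x))\<^sup>2"
      unfolding e norm_add_sq by (simp add: power_mult_distrib)
    moreover note mn[of "(1 - l) *\<^sub>R x + l *\<^sub>R z"]
    ultimately have "0 \<le> l * ((g z - g x + L * ((x - y) \<bullet> (z - x))) + l * (L / 2 * (norm (z - x))\<^sup>2))"
      by (rule arith_aux)
    then show ?thesis using l by (simp add: zero_le_mult_iff)
  qed
  have "0 \<le> g z - g x + L * ((x - y) \<bullet> (z - x))"
    by (rule pos_lim[OF _ key]) (use L in auto)
  moreover have "(norm (z - y))\<^sup>2 = (norm (z - x))\<^sup>2 + 2 * ((z - x) \<bullet> (x - y)) + (norm (x - y))\<^sup>2"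
    using norm_add_sq[of "z - x" "x - y"] by simp
  then have "L / 2 * (norm (z - y))\<^sup>2 = L / 2 * (norm (z - x))\<^sup>2 + L * ((x - y) \<bullet> (z - x)) + L / 2 * (norm (x - y))\<^sup>2"
    using real_aux2 inner_commute by metis
  ultimately show ?thesis by linarith
qed

lemma final_aux:
  fixes T fxk fz A B fxm fs um uk tm L :: real
  assumes T1: "T \<ge> 1" and st: "fxk \<le> fz + L / 2 * (A - B)"
    and fz: "fz \<le> (1 - 1 / T) * fxm + (1 / T) * fs"
    and um: "um = T\<^sup>2 * A" and uk: "uk = T\<^sup>2 * B" and tr: "T\<^sup>2 - T = tm\<^sup>2"
  shows "T\<^sup>2 * (fxk - fs) + L / 2 * uk \<le> tm\<^sup>2 * (fxm - fs) + L / 2 * um"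
proof -
  have T2: "T\<^sup>2 \<ge> 0" by simp
  have h1: "T\<^sup>2 * fxk \<le> T\<^sup>2 * (fz + L / 2 * (A - B))" using mult_left_mono[OF st T2] .
  have e1: "T\<^sup>2 * (fz + L / 2 * (A - B)) = T\<^sup>2 * fz + L / 2 * um - L / 2 * uk"
    unfolding um uk by (simp add: field_simps)
  have h2: "T\<^sup>2 * fz \<le> T\<^sup>2 * ((1 - 1 / T) * fxm + (1 / T) * fs)" using mult_left_mono[OF fz T2] .
  have e2: "T\<^sup>2 * ((1 - 1 / T) * fxm + (1 / T) * fs) = (T\<^sup>2 - T) * fxm + T * fs"
    using T1 by (simp add: field_simps power2_eq_square)
  have e3: "T\<^sup>2 * (fxk - fs) = T\<^sup>2 * fxk - (T\<^sup>2 - T) * fs - T * fs" by (simp add: algebra_simps)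
  have e4: "tm\<^sup>2 * (fxm - fs) = (T\<^sup>2 - T) * fxm - (T\<^sup>2 - T) * fs" unfolding tr by (simp add: algebra_simps)
  show ?thesis using h1 h2 e1 e2 e3 e4 by linarith
qed

theorem theorem1:
  fixes f :: "'a::euclidean_space \<Rightarrow> real"
    and grad :: "'a \<Rightarrow> 'a"
    and L :: real
    and xstar :: "'a"
    and x y :: "nat \<Rightarrow> 'a"
    and t :: "nat \<Rightarrow> real"
    and fhat :: "nat \<Rightarrow> 'a \<Rightarrow> real"
  assumes L_pos: "L > 0"
    and f_convex: "convex_on UNIV f"
    and f_grad: "\<And>z. (f has_derivative (\<lambda>h. grad z \<bullet> h)) (at z)"
    and f_smooth: "\<And>u v. norm (grad u - grad v) \<le> L * norm (u - v)"
    and xstar_min: "\<And>z. f xstar \<le> f z"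
    and y1: "y 1 = x 0"
    and t1: "t 1 = 1"
    and x_step: "\<And>k z. k \<ge> 1 \<Longrightarrow>
        fhat k (x k) + L / 2 * (norm (x k - y k))\<^sup>2 \<le> fhat k z + L / 2 * (norm (z - y k))\<^sup>2"
    and t_step: "\<And>k. k \<ge> 1 \<Longrightarrow> t (k + 1) = (1 + sqrt (1 + 4 * (t k)\<^sup>2)) / 2"
    and y_step: "\<And>k. k \<ge> 1 \<Longrightarrow>
        y (k + 1) = x k + ((t k - 1) / t (k + 1)) *\<^sub>R (x k - x (k - 1))"
    and model_convex: "\<And>k. k \<ge> 1 \<Longrightarrow> convex_on UNIV (fhat k)"
    and model_lower: "\<And>k z. k \<ge> 1 \<Longrightarrow> fhat k z \<ge> f (y k) + grad (y k) \<bullet> (z - y k)"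
    and model_upper: "\<And>k z. k \<ge> 1 \<Longrightarrow> fhat k z \<le> f z"
  shows "\<And>k. k \<ge> 1 \<Longrightarrow> f (x k) - f xstar \<le> L * (norm (x 0 - xstar))\<^sup>2 / (2 * (t k)\<^sup>2)"
proof -
  have tge: "t k \<ge> 1" if "k \<ge> 1" for k
    using that
  proof (induction k rule: dec_induct)
    case base then show ?case using t1 by simp
  next
    case (step m)
    define s where "s = sqrt (1 + 4 * (t m)\<^sup>2)"
    have "1 \<le> s" unfolding s_def by simp
    moreover have "t (m + 1) = (1 + s) / 2" using t_step step unfolding s_def by simp
    ultimately have "1 \<le> t (m + 1)" by (simp add: field_simps)
    then show ?case by simp
  qed
  have trec: "(t (k + 1))\<^sup>2 - t (k + 1) = (t k)\<^sup>2" if "k \<ge> 1" for k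
  proof -
    define s where "s = sqrt (1 + 4 * (t k)\<^sup>2)"
    have s2: "s\<^sup>2 = 1 + 4 * (t k)\<^sup>2" unfolding s_def by (simp add: add_nonneg_nonneg)
    have T: "t (k + 1) = (1 + s) / 2" using t_step[OF that] s_def by simp
    have "((1 + s) / 2)\<^sup>2 - (1 + s) / 2 = (s\<^sup>2 - 1) / 4"
      by (simp add: field_simps power2_eq_square)
    then show ?thesis unfolding T s2 by simp
  qed
  have star: "f (x k) \<le> f z + L / 2 * ((norm (z - y k))\<^sup>2 - (norm (z - x k))\<^sup>2)"
    if k: "k \<ge> 1" for k z
  proof -
    have "f (x k) \<le> f (y k) + grad (y k) \<bullet> (x k - y k) + L / 2 * (norm (x k - y k))\<^sup>2"
      by (rule descent[OF f_grad f_smooth])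
    also have "\<dots> \<le> fhat k (x k) + L / 2 * (norm (x k - y k))\<^sup>2"
      using model_lower[OF k, of "x k"] by simp
    also have "\<dots> \<le> fhat k z + L / 2 * (norm (z - y k))\<^sup>2 - L / 2 * (norm (z - x k))\<^sup>2"
      using three_point[OF model_convex[OF k] L_pos x_step[OF k], of z] by simp
    also have "\<dots> \<le> f z + L / 2 * ((norm (z - y k))\<^sup>2 - (norm (z - x k))\<^sup>2)"
      using model_upper[OF k, of z] by (simp add: algebra_simps)
    finally show ?thesis .
  qed
  define u where "u k = t k *\<^sub>R x k - (t k - 1) *\<^sub>R x (k - 1) - xstar" for k
  define E where "E k = (t k)\<^sup>2 * (f (x k) - f xstar) + L / 2 * (norm (u k))\<^sup>2" for k
  define C where "C = L / 2 * (norm (x 0 - xstar))\<^sup>2"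
  have E1: "E 1 \<le> C"
  proof -
    have "u 1 = x 1 - xstar" unfolding u_def using t1 by simp
    then have nu: "norm (u 1) = norm (xstar - x 1)" by (simp add: norm_minus_commute)
    have "f (x 1) \<le> f xstar + L / 2 * ((norm (xstar - x 0))\<^sup>2 - (norm (xstar - x 1))\<^sup>2)"
      using star[of 1 xstar] y1 by simp
    then show ?thesis unfolding E_def C_def nu t1 by (simp add: norm_minus_commute algebra_simps)
  qed
  have Estep: "E (m + 1) \<le> E m" if m: "m \<ge> 1" for m
  proof -
    define k where "k = m + 1"
    define T where "T = t k"
    have T1: "T \<ge> 1" using tge[of k] unfolding T_def k_def by simp
    define z where "z = (1 / T) *\<^sub>R ((T - 1) *\<^sub>R x m + xstar)"
    have Tz: "T *\<^sub>R z = (T - 1) *\<^sub>R x m + xstar" using T1 unfolding z_def by simp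
    have e1: "T *\<^sub>R (z - x k) = - u k"
      unfolding u_def scaleR_diff_right Tz T_def[symmetric] by (simp add: k_def algebra_simps)
    have Ty: "T *\<^sub>R y k = T *\<^sub>R x m + (t m - 1) *\<^sub>R (x m - x (m - 1))"
      using y_step[OF m] T1 unfolding T_def k_def by (simp add: scaleR_add_right)
    have e2: "T *\<^sub>R (z - y k) = - u m"
      unfolding u_def scaleR_diff_right Tz Ty by (simp add: algebra_simps)
    have n1: "(norm (u k))\<^sup>2 = T\<^sup>2 * (norm (z - x k))\<^sup>2"
    proof -
      have "norm (u k) = T * norm (z - x k)" using arg_cong[OF e1, of norm] T1 by simp
      then show ?thesis by (simp add: power_mult_distrib)
    qed
    have n2: "(norm (u m))\<^sup>2 = T\<^sup>2 * (norm (z - y k))\<^sup>2"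
    proof -
      have "norm (u m) = T * norm (z - y k)" using arg_cong[OF e2, of norm] T1 by simp
      then show ?thesis by (simp add: power_mult_distrib)
    qed
    have zc: "z = (1 - 1 / T) *\<^sub>R x m + (1 / T) *\<^sub>R xstar"
    proof -
      have "1 - 1 / T = (T - 1) / T" using T1 by (simp add: field_simps)
      then show ?thesis unfolding z_def scaleR_add_right scaleR_scaleR by simp
    qed
    have fz: "f z \<le> (1 - 1 / T) * f (x m) + (1 / T) * f xstar"
      unfolding zc using T1 by (intro convex_onD[OF f_convex]) auto
    have st: "f (x k) \<le> f z + L / 2 * ((norm (z - y k))\<^sup>2 - (norm (z - x k))\<^sup>2)"
      using star[of k z] unfolding k_def by simp
    have tr: "T\<^sup>2 - T = (t m)\<^sup>2" using trec[OF m] unfolding T_def k_def .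
    have "T\<^sup>2 * (f (x k) - f xstar) + L / 2 * (norm (u k))\<^sup>2 \<le> (t m)\<^sup>2 * (f (x m) - f xstar) + L / 2 * (norm (u m))\<^sup>2"
      by (rule final_aux[OF T1 st fz n2 n1 tr])
    then show ?thesis unfolding E_def T_def k_def by simp
  qed
  have Ebound: "E k \<le> C" if "k \<ge> 1" for k
    using that
  proof (induction k rule: dec_induct)
    case base then show ?case using E1 .
  next
    case (step m) then show ?case using Estep[of m] by simp
  qed
  show "f (x k) - f xstar \<le> L * (norm (x 0 - xstar))\<^sup>2 / (2 * (t k)\<^sup>2)" if k: "k \<ge> 1" for k
  proof -
    have tk: "t k \<ge> 1" using tge[OF k] .
    have "(t k)\<^sup>2 * (f (x k) - f xstar) \<le> C"
    proof -
      have "0 \<le> L / 2 * (norm (u k))\<^sup>2" using L_pos by simp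
      then show ?thesis using Ebound[OF k] unfolding E_def by linarith
    qed
    then show ?thesis using tk unfolding C_def by (simp add: field_simps)
  qed
qed

end
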